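(* Let $0<p<\infty$, $0<q\le\infty$ and $s>\max\{0,1/p-1\}$. Then \[M(B^s_{p,q})\hookrightarrow M^s_{p,q}\hookrightarrow B^s_{p,q,\mathrm{unif}}.\]
   Context: Besov spaces: $B^s_{p,q}=B^s_{p,q}(\mathbb R)$ is the inhomogeneous Besov space, with quasi-norm \[\|f\|_{L^p}+\Big(\int_{|h|\le1}|h|^{-sq}\|\Delta^m_hf\|_{L^p}^q\,dh/|h|\Big)^{1/q},\] where $m>s$ is an integer and $\Delta_h^mf(x)=\sum_{j=0}^m(-1)^{m-j}\binom mj f(x+jh)$. Multipliers: $M(X)$ is the set of measurable $g$ with $\|g\|_{M(X)}=\sup_{\|f\|_X\le1}\|gf\|_X<\infty$. Auxiliary function: let $\psi\in C_0^\infty(\mathbb R)$ be non-negative with $\sum_{z\in\mathbb Z}\psi(\cdot-z)\equiv1$ and $\operatorname{supp}\psi=[-1,1]$. Auxiliary spaces: \[B^s_{p,q,\mathrm{unif}}=\{f\in L^1_{\mathrm{loc}}:\ \sup_{z\in\mathbb Z}\|f\psi(\cdot-z)\|_{B^s_{p,q}}<\infty\},\] \[M^s_{p,q}=\Big\{f\in L^1_{\mathrm{loc}}:\ \sup_{\|\{c_z\}\|_{\ell^p(\mathbb Z)}\le1}\Big\|f\sum_{z\in\mathbb Z}c_z\psi(\cdot-z)\Big\|_{B^s_{p,q}}<\infty\Big\},\] each with the quasi-norm given by the corresponding supremum. Notation: $X\hookrightarrow Y$ denotes continuous embedding. *)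

theory Defs
  imports "HOL-Analysis.Analysis"
begin

definition epow :: "ennreal \<Rightarrow> real \<Rightarrow> ennreal" where
  "epow x r = (if x = \<infinity> then \<infinity> else ennreal (enn2real x powr r))"

definition fdiff :: "nat \<Rightarrow> real \<Rightarrow> (real \<Rightarrow> real) \<Rightarrow> real \<Rightarrow> real" where
  "fdiff m h f x = (\<Sum>j=0..m. (-1) ^ (m - j) * real (m choose j) * f (x + real j * h))"

definition Lp_qnorm :: "real \<Rightarrow> (real \<Rightarrow> real) \<Rightarrow> ennreal" where
  "Lp_qnorm p f = epow (\<integral>\<^sup>+ x. ennreal (\<bar>f x\<bar> powr p) \<partial>lborel) (1 / p)"

definition lp_qnorm :: "real \<Rightarrow> (int \<Rightarrow> real) \<Rightarrow> ennreal" where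
  "lp_qnorm p c = epow (\<Sum>\<^sub>\<infinity> z. ennreal (\<bar>c z\<bar> powr p)) (1 / p)"

text \<open>Order of differences used: the integer m = floor s + 1 > s.\<close>
definition besov_m :: "real \<Rightarrow> nat" where
  "besov_m s = nat \<lfloor>s\<rfloor> + 1"

definition besov_qnorm :: "real \<Rightarrow> ennreal \<Rightarrow> real \<Rightarrow> (real \<Rightarrow> real) \<Rightarrow> ennreal" where
  "besov_qnorm p q s f =
     Lp_qnorm p f +
     (if q = \<infinity> then
        (SUP h \<in> {h. 0 < \<bar>h\<bar> \<and> \<bar>h\<bar> \<le> 1}.
            ennreal (\<bar>h\<bar> powr (- s)) * Lp_qnorm p (fdiff (besov_m s) h f))
      else
        epow (\<integral>\<^sup>+ h. indicator {h. \<bar>h\<bar> \<le> 1} h *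
                 ennreal (\<bar>h\<bar> powr (- s * enn2real q) / \<bar>h\<bar>) *
                 epow (Lp_qnorm p (fdiff (besov_m s) h f)) (enn2real q) \<partial>lborel)
             (1 / enn2real q))"

definition besov_space :: "real \<Rightarrow> ennreal \<Rightarrow> real \<Rightarrow> (real \<Rightarrow> real) set" where
  "besov_space p q s = {f. f \<in> borel_measurable lborel \<and> besov_qnorm p q s f < \<infinity>}"

definition L1_loc :: "(real \<Rightarrow> real) set" where
  "L1_loc = {f. \<forall>a b. set_integrable lborel {a..b} f}"

definition mult_qnorm :: "(real \<Rightarrow> real) set \<Rightarrow> ((real \<Rightarrow> real) \<Rightarrow> ennreal) \<Rightarrow> (real \<Rightarrow> real) \<Rightarrow> ennreal" where
  "mult_qnorm X N g = (SUP f \<in> {f \<in> X. N f \<le> 1}. N (\<lambda>x. g x * f x))"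

definition mult_space :: "(real \<Rightarrow> real) set \<Rightarrow> ((real \<Rightarrow> real) \<Rightarrow> ennreal) \<Rightarrow> (real \<Rightarrow> real) set" where
  "mult_space X N = {g. g \<in> borel_measurable lborel \<and> mult_qnorm X N g < \<infinity>}"

definition admissible_psi :: "(real \<Rightarrow> real) \<Rightarrow> bool" where
  "admissible_psi \<psi> \<longleftrightarrow>
     (\<forall>k x. ((deriv ^^ k) \<psi>) differentiable (at x)) \<and>
     (\<forall>x. \<psi> x \<ge> 0) \<and>
     closure {x. \<psi> x \<noteq> 0} = {-1..1} \<and>
     (\<forall>x. ((\<lambda>z::int. \<psi> (x - real_of_int z)) has_sum 1) UNIV)"

definition unif_qnorm :: "(real \<Rightarrow> real) \<Rightarrow> real \<Rightarrow> ennreal \<Rightarrow> real \<Rightarrow> (real \<Rightarrow> real) \<Rightarrow> ennreal" where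
  "unif_qnorm \<psi> p q s f = (SUP z::int. besov_qnorm p q s (\<lambda>x. f x * \<psi> (x - real_of_int z)))"

definition unif_space :: "(real \<Rightarrow> real) \<Rightarrow> real \<Rightarrow> ennreal \<Rightarrow> real \<Rightarrow> (real \<Rightarrow> real) set" where
  "unif_space \<psi> p q s = {f \<in> L1_loc. unif_qnorm \<psi> p q s f < \<infinity>}"

definition Ms_qnorm :: "(real \<Rightarrow> real) \<Rightarrow> real \<Rightarrow> ennreal \<Rightarrow> real \<Rightarrow> (real \<Rightarrow> real) \<Rightarrow> ennreal" where
  "Ms_qnorm \<psi> p q s f = (SUP c \<in> {c :: int \<Rightarrow> real. lp_qnorm p c \<le> 1}.
      besov_qnorm p q s (\<lambda>x. f x * (\<Sum>\<^sub>\<infinity> z. c z * \<psi> (x - real_of_int z))))"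

definition Ms_space :: "(real \<Rightarrow> real) \<Rightarrow> real \<Rightarrow> ennreal \<Rightarrow> real \<Rightarrow> (real \<Rightarrow> real) set" where
  "Ms_space \<psi> p q s = {f \<in> L1_loc. Ms_qnorm \<psi> p q s f < \<infinity>}"

definition cont_embed :: "'a set \<Rightarrow> ('a \<Rightarrow> ennreal) \<Rightarrow> 'a set \<Rightarrow> ('a \<Rightarrow> ennreal) \<Rightarrow> bool" where
  "cont_embed X NX Y NY \<longleftrightarrow> X \<subseteq> Y \<and> (\<exists>C::real. C \<ge> 0 \<and> (\<forall>f \<in> X. NY f \<le> ennreal C * NX f))"

end

theory Submission imports Defs begin


lemma epow_ennreal: "x \<ge> 0 \<Longrightarrow> epow (ennreal x) r = ennreal (x powr r)"
  by (simp add: epow_def)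

lemma epow_top[simp]: "epow \<infinity> r = \<infinity>"
  by (simp add: epow_def)

lemma ennreal_fin_cases:
  assumes "a \<noteq> (\<infinity>::ennreal)" obtains x where "a = ennreal x" "x \<ge> 0"
  using assms by (cases a) auto

lemma epow_mono:
  assumes "r > 0" "a \<le> b" shows "epow a r \<le> epow b r"
proof (cases "b = \<infinity>")
  case True then show ?thesis by (simp add: epow_def)
next
  case False
  then have "a \<noteq> \<infinity>" using assms(2) by (auto simp: top_unique)
  obtain x where x: "a = ennreal x" "x \<ge> 0" using \<open>a \<noteq> \<infinity>\<close> by (rule ennreal_fin_cases)
  obtain y where y: "b = ennreal y" "y \<ge> 0" using False by (rule ennreal_fin_cases)
  have "x \<le> y" using x y assms(2) by simp
  then show ?thesis using assms x y
    by (auto simp: epow_def intro!: ennreal_leI powr_mono2)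
qed

lemma epow_nz:
  assumes "r > 0" "b \<noteq> 0" shows "epow b r \<noteq> 0"
proof (cases "b = \<infinity>")
  case True then show ?thesis by (simp add: epow_def)
next
  case False
  obtain y where y: "b = ennreal y" "y \<ge> 0" using False by (rule ennreal_fin_cases)
  then have "y > 0" using assms by (cases "y = 0") auto
  then show ?thesis using y by (simp add: epow_def)
qed

lemma epow_mult:
  assumes r: "r > 0" shows "epow (a * b) r = epow a r * epow b r"
proof (cases "a = \<infinity> \<or> b = \<infinity>")
  case True
  then show ?thesis
  proof
    assume a: "a = \<infinity>"
    show ?thesis
    proof (cases "b = 0")
      case True then show ?thesis using a r by (simp add: epow_def)
    next
      case False
      then have "epow b r \<noteq> 0" using r by (simp add: epow_nz)
      then show ?thesis using a False by (simp add: epow_def ennreal_top_mult)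
    qed
  next
    assume b: "b = \<infinity>"
    show ?thesis
    proof (cases "a = 0")
      case True then show ?thesis using b r by (simp add: epow_def)
    next
      case False
      then have "epow a r \<noteq> 0" using r by (simp add: epow_nz)
      then show ?thesis using b False by (simp add: epow_def ennreal_mult_top)
    qed
  qed
next
  case False
  then obtain x y where x: "a = ennreal x" "x \<ge> 0" and y: "b = ennreal y" "y \<ge> 0"
    by (metis ennreal_fin_cases)
  then show ?thesis using r
    by (simp add: epow_def powr_mult ennreal_mult[symmetric])
qed

lemma epow_inv:
  assumes "r > 0" shows "epow (epow a r) (1/r) = a"
  by (cases a) (use assms in \<open>auto simp: epow_def powr_powr\<close>)

lemma epow_0[simp]: "r > 0 \<Longrightarrow> epow 0 r = 0"
  by (simp add: epow_def)

lemma epow_1[simp]: "epow 1 r = 1"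
  by (simp add: epow_def)



lemma nn_integral_cmult_le: "c * integral\<^sup>N M f \<le> (\<integral>\<^sup>+x. c * f x \<partial>M)"
proof -
  have "c * integral\<^sup>N M f = (SUP g \<in> {g. simple_function M g \<and> g \<le> f}. c * integral\<^sup>S M g)"
    unfolding nn_integral_def by (simp add: SUP_mult_left_ennreal)
  also have "\<dots> \<le> (\<integral>\<^sup>+x. c * f x \<partial>M)"
  proof (rule SUP_least)
    fix g assume g: "g \<in> {g. simple_function M g \<and> g \<le> f}"
    then have sf: "simple_function M (\<lambda>x. c * g x)" by auto
    have "c * integral\<^sup>S M g = integral\<^sup>S M (\<lambda>x. c * g x)" using g by simp
    also have "\<dots> = integral\<^sup>N M (\<lambda>x. c * g x)" using sf by (simp add: nn_integral_eq_simple_integral)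
    also have "\<dots> \<le> (\<integral>\<^sup>+x. c * f x \<partial>M)" using g
      by (auto intro!: nn_integral_mono mult_left_mono simp: le_fun_def)
    finally show "c * integral\<^sup>S M g \<le> (\<integral>\<^sup>+x. c * f x \<partial>M)" .
  qed
  finally show ?thesis .
qed

lemma nn_integral_cmult_gen:
  assumes "c \<noteq> \<infinity>" shows "(\<integral>\<^sup>+x. c * f x \<partial>M) = c * integral\<^sup>N M f"
proof (cases "c = 0")
  case True then show ?thesis by simp
next
  case False
  obtain r where r0: "c = ennreal r" "r \<ge> 0" using assms by (rule ennreal_fin_cases)
  have r: "c = ennreal r" "r > 0" using r0 False by auto
  define d where "d = ennreal (1/r)"
  have cd: "d * c = 1" using r by (simp add: d_def ennreal_mult''[symmetric])
  have "d * (\<integral>\<^sup>+x. c * f x \<partial>M) \<le> (\<integral>\<^sup>+x. d * (c * f x) \<partial>M)" by (rule nn_integral_cmult_le)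
  also have "\<dots> = integral\<^sup>N M f" by (simp add: mult.assoc[symmetric] cd)
  finally have *: "d * (\<integral>\<^sup>+x. c * f x \<partial>M) \<le> integral\<^sup>N M f" .
  have "(\<integral>\<^sup>+x. c * f x \<partial>M) = c * (d * (\<integral>\<^sup>+x. c * f x \<partial>M))"
    by (simp add: mult.assoc[symmetric] cd mult.commute[of c d])
  also have "\<dots> \<le> c * integral\<^sup>N M f" using * by (rule mult_left_mono) simp
  finally show ?thesis using nn_integral_cmult_le[of c M f] by (rule antisym)
qed

lemma fdiff_scale: "fdiff m h (\<lambda>x. t * f x) = (\<lambda>y. t * fdiff m h f y)"
  unfolding fdiff_def by (auto simp: sum_distrib_left algebra_simps)

lemma Lp_scale:
  assumes p: "p > 0" shows "Lp_qnorm p (\<lambda>x. t * f x) = ennreal \<bar>t\<bar> * Lp_qnorm p f"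
proof -
  have "(\<integral>\<^sup>+x. ennreal (\<bar>t * f x\<bar> powr p) \<partial>lborel)
      = (\<integral>\<^sup>+x. ennreal (\<bar>t\<bar> powr p) * ennreal (\<bar>f x\<bar> powr p) \<partial>lborel)"
    by (simp add: abs_mult powr_mult ennreal_mult)
  also have "\<dots> = ennreal (\<bar>t\<bar> powr p) * (\<integral>\<^sup>+x. ennreal (\<bar>f x\<bar> powr p) \<partial>lborel)"
    by (rule nn_integral_cmult_gen) simp
  finally show ?thesis
    unfolding Lp_qnorm_def using p
    by (simp add: epow_mult epow_ennreal powr_powr)
qed

lemma besov_scale:
  assumes p: "p > 0" and q: "q > 0"
  shows "besov_qnorm p q s (\<lambda>x. t * f x) = ennreal \<bar>t\<bar> * besov_qnorm p q s f"
proof -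
  let ?L = "\<lambda>h. Lp_qnorm p (fdiff (besov_m s) h f)"
  let ?H = "{h. 0 < \<bar>h\<bar> \<and> \<bar>h\<bar> \<le> 1}"
  let ?T = "ennreal \<bar>t\<bar>"
  have L: "Lp_qnorm p (fdiff (besov_m s) h (\<lambda>x. t * f x)) = ?T * ?L h" for h
    unfolding fdiff_scale by (rule Lp_scale[OF p])
  have L0: "Lp_qnorm p (\<lambda>x. t * f x) = ?T * Lp_qnorm p f"
    by (rule Lp_scale[OF p])
  show ?thesis
  proof (cases "q = \<infinity>")
    case True
    have "(SUP h \<in> ?H. ennreal (\<bar>h\<bar> powr (- s)) * Lp_qnorm p (fdiff (besov_m s) h (\<lambda>x. t * f x)))
        = (SUP h \<in> ?H. ?T * (ennreal (\<bar>h\<bar> powr (- s)) * ?L h))"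
      unfolding L by (simp only: mult.left_commute)
    also have "\<dots> = ?T * (SUP h \<in> ?H. ennreal (\<bar>h\<bar> powr (- s)) * ?L h)"
      by (rule SUP_mult_left_ennreal[symmetric])
    finally have S: "(SUP h \<in> ?H. ennreal (\<bar>h\<bar> powr (- s)) * Lp_qnorm p (fdiff (besov_m s) h (\<lambda>x. t * f x)))
        = ?T * (SUP h \<in> ?H. ennreal (\<bar>h\<bar> powr (- s)) * ?L h)" .
    show ?thesis using True
      unfolding besov_qnorm_def L0 S by (simp add: distrib_left)
  next
    case False
    define Q where "Q = enn2real q"
    have Q: "Q > 0" using q False by (simp add: Q_def enn2real_positive_iff less_top)
    let ?W = "\<lambda>h. indicator {h. \<bar>h\<bar> \<le> 1} h * ennreal (\<bar>h\<bar> powr (- s * Q) / \<bar>h\<bar>)"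
    have e: "epow (?T * ?L h) Q = ennreal (\<bar>t\<bar> powr Q) * epow (?L h) Q" for h
      using Q by (simp add: epow_mult epow_ennreal)
    have "(\<integral>\<^sup>+ h. ?W h * epow (Lp_qnorm p (fdiff (besov_m s) h (\<lambda>x. t * f x))) Q \<partial>lborel)
       = (\<integral>\<^sup>+ h. ennreal (\<bar>t\<bar> powr Q) * (?W h * epow (?L h) Q) \<partial>lborel)"
      unfolding L e by (simp only: mult.left_commute)
    also have "\<dots> = ennreal (\<bar>t\<bar> powr Q) * (\<integral>\<^sup>+ h. ?W h * epow (?L h) Q \<partial>lborel)"
      by (rule nn_integral_cmult_gen) simp
    finally have I: "(\<integral>\<^sup>+ h. ?W h * epow (Lp_qnorm p (fdiff (besov_m s) h (\<lambda>x. t * f x))) Q \<partial>lborel)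
       = ennreal (\<bar>t\<bar> powr Q) * (\<integral>\<^sup>+ h. ?W h * epow (?L h) Q \<partial>lborel)" .
    have E: "epow (ennreal (\<bar>t\<bar> powr Q) * X) (1 / Q) = ?T * epow X (1/Q)" for X
      using Q by (simp add: epow_mult epow_ennreal powr_powr)
    show ?thesis using False
      unfolding besov_qnorm_def Q_def[symmetric] L0 I E by (simp only: if_False distrib_left)
  qed
qed



lemma fdiff_0[simp]: "fdiff 0 h f x = f x"
  unfolding fdiff_def by simp

lemma fdiff_Suc: "fdiff (Suc n) h f x = fdiff n h f (x + h) - fdiff n h f x"
proof -
  define a where "a j = f (x + real j * h)" for j
  have fd: "fdiff k h f x = (\<Sum>j\<le>k. (-1) ^ (k - j) * real (k choose j) * a j)" for k
    unfolding fdiff_def a_def by (simp add: atLeast0AtMost)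
  have fdh: "fdiff n h f (x + h) = (\<Sum>j\<le>n. (-1) ^ (n - j) * real (n choose j) * a (Suc j))"
    unfolding fdiff_def a_def by (simp add: atLeast0AtMost algebra_simps)
  have e1: "fdiff (Suc n) h f x = (-1) ^ Suc n * a 0 +
      (\<Sum>j\<le>n. (-1) ^ (n - j) * real (Suc n choose Suc j) * a (Suc j))"
    unfolding fd by (subst sum.atMost_Suc_shift) simp
  have e2: "(\<Sum>j\<le>n. (-1) ^ (n - j) * real (Suc n choose Suc j) * a (Suc j)) =
      (\<Sum>j\<le>n. (-1) ^ (n - j) * real (n choose j) * a (Suc j)) +
      (\<Sum>j\<le>n. (-1) ^ (n - j) * real (n choose Suc j) * a (Suc j))"
    by (simp add: sum.distrib algebra_simps)
  have "(-1) ^ Suc n * a 0 + (\<Sum>j\<le>n. (-1) ^ (n - j) * real (n choose Suc j) * a (Suc j))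
      = (\<Sum>j\<le>Suc n. (-1) ^ (Suc n - j) * real (n choose j) * a j)"
    by (subst sum.atMost_Suc_shift) simp
  also have "\<dots> = (\<Sum>j\<le>n. (-1) ^ (Suc n - j) * real (n choose j) * a j)"
    by simp
  also have "\<dots> = - fdiff n h f x"
    unfolding fd by (simp add: sum_negf[symmetric] Suc_diff_le)
  finally have e3: "(-1) ^ Suc n * a 0 + (\<Sum>j\<le>n. (-1) ^ (n - j) * real (n choose Suc j) * a (Suc j))
      = - fdiff n h f x" .
  show ?thesis using e1 e2 e3 fdh by simp
qed

lemma fdiff_deriv:
  assumes "\<And>y. (f has_real_derivative f' y) (at y)"
  shows "((\<lambda>y. fdiff n h f y) has_real_derivative fdiff n h f' x) (at x)"
proof -
  have d: "((\<lambda>y. f (y + real j * h)) has_real_derivative f' (x + real j * h)) (at x)" for j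
    using assms[of "x + real j * h"] by (simp add: DERIV_shift)
  show ?thesis
    unfolding fdiff_def
    by (intro DERIV_sum DERIV_cmult d)
qed

lemma mvt_bound:
  fixes G G' :: "real \<Rightarrow> real"
  assumes d: "\<And>y. (G has_real_derivative G' y) (at y)" and b: "\<And>y. \<bar>G' y\<bar> \<le> K"
  shows "\<bar>G (x + h) - G x\<bar> \<le> \<bar>h\<bar> * K"
proof -
  consider "h = 0" | "h > 0" | "h < 0" by linarith
  then show ?thesis
  proof cases
    case 1 then show ?thesis using b[of 0] by simp
  next
    case 2
    then obtain z where "G (x + h) - G x = (x + h - x) * G' z"
      using MVT2[of x "x + h" G G'] d by auto
    then show ?thesis using 2 b[of z] by (simp add: abs_mult mult_left_mono)
  next
    case 3
    then obtain z where "G x - G (x + h) = (x - (x + h)) * G' z"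
      using MVT2[of "x + h" x G G'] d by auto
    then have "\<bar>G (x + h) - G x\<bar> = \<bar>h\<bar> * \<bar>G' z\<bar>" by (simp add: abs_mult abs_minus_commute)
    then show ?thesis using b[of z] by (simp add: mult_left_mono)
  qed
qed

lemma admissible_deriv:
  assumes "admissible_psi \<psi>"
  shows "((deriv ^^ k) \<psi> has_real_derivative (deriv ^^ Suc k) \<psi> x) (at x)"
proof -
  have "(deriv ^^ k) \<psi> differentiable (at x)" using assms unfolding admissible_psi_def by blast
  then have "((deriv ^^ k) \<psi> has_real_derivative deriv ((deriv ^^ k) \<psi>) x) (at x)"
    by (simp only: DERIV_deriv_iff_real_differentiable)
  then show ?thesis by simp
qed

lemma admissible_zero:
  assumes adm: "admissible_psi \<psi>" and x: "1 < \<bar>x\<bar>"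
  shows "(deriv ^^ k) \<psi> x = 0"
  using x
proof (induction k arbitrary: x)
  case 0
  have cl: "closure {x. \<psi> x \<noteq> 0} = {-1..1}" using adm unfolding admissible_psi_def by blast
  show ?case
  proof (rule ccontr)
    assume "(deriv ^^ 0) \<psi> x \<noteq> 0"
    then have "x \<in> {x. \<psi> x \<noteq> 0}" by simp
    then have "x \<in> closure {x. \<psi> x \<noteq> 0}" by (rule subsetD[OF closure_subset])
    then have "x \<in> {-1..1}" by (simp only: cl)
    then have "\<bar>x\<bar> \<le> 1" by (simp add: abs_le_iff)
    then show False using 0 by linarith
  qed
next
  case (Suc k)
  let ?S = "{y::real. 1 < \<bar>y\<bar>}"
  have op: "open ?S"
    by (rule open_Collect_less) (auto intro!: continuous_intros)
  have z: "(\<lambda>_. 0) y = (deriv ^^ k) \<psi> y" if "y \<in> ?S" for y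
    using Suc.IH[of y] that by simp
  have "((\<lambda>_. 0) has_real_derivative 0) (at x)" by simp
  then have d0: "((deriv ^^ k) \<psi> has_real_derivative 0) (at x)"
    by (rule has_field_derivative_transform_within_open[OF _ op _ z]) (use Suc.prems in simp)
  have d1: "((deriv ^^ k) \<psi> has_real_derivative (deriv ^^ Suc k) \<psi> x) (at x)"
    by (rule admissible_deriv[OF adm])
  show ?case using DERIV_unique[OF d1 d0] .
qed

lemma admissible_cont:
  assumes "admissible_psi \<psi>"
  shows "continuous_on UNIV ((deriv ^^ k) \<psi>)"
proof -
  have "\<forall>x\<in>UNIV. isCont ((deriv ^^ k) \<psi>) x"
    using admissible_deriv[OF assms] by (blast intro: DERIV_isCont)
  then show ?thesis by (rule continuous_at_imp_continuous_on)
qed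

lemma admissible_bound:
  assumes "admissible_psi \<psi>"
  shows "\<exists>B\<ge>0. \<forall>x. \<bar>(deriv ^^ k) \<psi> x\<bar> \<le> B"
proof -
  have "compact ((deriv ^^ k) \<psi> ` {-1..1})"
    by (rule compact_continuous_image[OF continuous_on_subset[OF admissible_cont[OF assms] subset_UNIV]]) simp
  then obtain a where a: "\<forall>y\<in>(deriv ^^ k) \<psi> ` {-1..1}. norm y \<le> a"
    using compact_imp_bounded bounded_iff by metis
  show ?thesis
  proof (intro exI[of _ "max a 0"] conjI allI)
    fix x
    show "\<bar>(deriv ^^ k) \<psi> x\<bar> \<le> max a 0"
    proof (cases "\<bar>x\<bar> \<le> 1")
      case True
      then have "x \<in> {-1..1}" by (auto simp: abs_le_iff)
      then have "(deriv ^^ k) \<psi> x \<in> (deriv ^^ k) \<psi> ` {-1..1}" by (rule imageI)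
      then have "norm ((deriv ^^ k) \<psi> x) \<le> a" by (rule bspec[OF a])
      then show ?thesis by simp
    next
      case False then show ?thesis using admissible_zero[OF assms, of x k] by simp
    qed
  qed simp
qed

lemma fdiff_psi_bound:
  assumes adm: "admissible_psi \<psi>" and B: "\<And>k x. \<bar>(deriv ^^ k) \<psi> x\<bar> \<le> B k"
  shows "\<bar>fdiff n h ((deriv ^^ k) \<psi>) x\<bar> \<le> \<bar>h\<bar> ^ n * B (n + k)"
proof (induction n arbitrary: k x)
  case 0 then show ?case using B by simp
next
  case (Suc n)
  have "\<bar>fdiff n h ((deriv ^^ k) \<psi>) (x + h) - fdiff n h ((deriv ^^ k) \<psi>) x\<bar>
      \<le> \<bar>h\<bar> * (\<bar>h\<bar> ^ n * B (n + Suc k))"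
    by (rule mvt_bound[OF fdiff_deriv[OF admissible_deriv[OF adm]] Suc.IH])
  then show ?case by (simp add: fdiff_Suc)
qed



definition Fc :: "(real \<Rightarrow> real) \<Rightarrow> (int \<Rightarrow> real) \<Rightarrow> real \<Rightarrow> real" where
  "Fc \<psi> c x = (\<Sum>\<^sub>\<infinity> z. c z * \<psi> (x - real_of_int z))"

definition Wn :: "real \<Rightarrow> real \<Rightarrow> int set" where
  "Wn x R = {z::int. \<bar>x - real_of_int z\<bar> \<le> R}"

lemma Wn_sub: "Wn x R \<subseteq> {\<lfloor>x - R\<rfloor>..\<lceil>x + R\<rceil>}"
proof
  fix z assume "z \<in> Wn x R"
  then have z: "x - R \<le> real_of_int z" "real_of_int z \<le> x + R" by (auto simp: Wn_def abs_le_iff)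
  have "real_of_int \<lfloor>x - R\<rfloor> \<le> real_of_int z" using z(1) of_int_floor_le[of "x - R"] by linarith
  moreover have "real_of_int z \<le> real_of_int \<lceil>x + R\<rceil>" using z(2) le_of_int_ceiling[of "x + R"] by linarith
  ultimately show "z \<in> {\<lfloor>x - R\<rfloor>..\<lceil>x + R\<rceil>}" by simp
qed

lemma Wn_finite[simp]: "finite (Wn x R)"
  by (rule finite_subset[OF Wn_sub]) simp

lemma Wn_card: "R \<ge> 0 \<Longrightarrow> real (card (Wn x R)) \<le> 2 * R + 3"
proof -
  assume R: "R \<ge> 0"
  have "card (Wn x R) \<le> card {\<lfloor>x - R\<rfloor>..\<lceil>x + R\<rceil>}"
    by (rule card_mono) (use Wn_sub in auto)
  also have "\<dots> = nat (\<lceil>x + R\<rceil> - \<lfloor>x - R\<rfloor> + 1)" by simp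
  finally have c: "real (card (Wn x R)) \<le> real (nat (\<lceil>x + R\<rceil> - \<lfloor>x - R\<rfloor> + 1))" by simp
  have "real_of_int \<lceil>x + R\<rceil> < x + R + 1" by linarith
  moreover have "x - R - 1 < real_of_int \<lfloor>x - R\<rfloor>" by linarith
  moreover have "real_of_int (\<lceil>x + R\<rceil> - \<lfloor>x - R\<rfloor> + 1) = real_of_int \<lceil>x + R\<rceil> - real_of_int \<lfloor>x - R\<rfloor> + 1"
    by simp
  ultimately have d: "real_of_int (\<lceil>x + R\<rceil> - \<lfloor>x - R\<rfloor> + 1) \<le> 2 * R + 3" by linarith
  have "real_of_int \<lfloor>x - R\<rfloor> \<le> real_of_int \<lceil>x + R\<rceil>"
    using R of_int_floor_le[of "x - R"] le_of_int_ceiling[of "x + R"] by linarith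
  then have "\<lfloor>x - R\<rfloor> \<le> \<lceil>x + R\<rceil>" by (simp only: of_int_le_iff)
  then have "real (nat (\<lceil>x + R\<rceil> - \<lfloor>x - R\<rfloor> + 1)) = real_of_int (\<lceil>x + R\<rceil> - \<lfloor>x - R\<rfloor> + 1)"
    by simp
  then show ?thesis using c d by linarith
qed

lemma Fc_local:
  assumes van: "\<And>y. 1 < \<bar>y\<bar> \<Longrightarrow> \<psi> y = 0" and W: "finite W" "Wn y 1 \<subseteq> W"
  shows "Fc \<psi> c y = (\<Sum>z\<in>W. c z * \<psi> (y - real_of_int z))"
proof -
  have "Fc \<psi> c y = (\<Sum>\<^sub>\<infinity> z\<in>W. c z * \<psi> (y - real_of_int z))"
    unfolding Fc_def
  proof (rule infsum_cong_neutral)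
    fix z assume "z \<in> UNIV - W"
    then have "z \<notin> Wn y 1" using W by auto
    then have "1 < \<bar>y - real_of_int z\<bar>" by (simp add: Wn_def)
    then show "c z * \<psi> (y - real_of_int z) = 0" using van by simp
  qed auto
  then show ?thesis using W by simp
qed

lemma fdiff_Fc:
  assumes van: "\<And>y. 1 < \<bar>y\<bar> \<Longrightarrow> \<psi> y = 0" and h: "\<bar>h\<bar> \<le> 1"
  shows "fdiff n h (Fc \<psi> c) x = (\<Sum>z\<in>Wn x (real n + 1). c z * fdiff n h \<psi> (x - real_of_int z))"
proof -
  let ?W = "Wn x (real n + 1)"
  have sub: "Wn (x + real j * h) 1 \<subseteq> ?W" if "j \<in> {0..n}" for j
  proof
    fix z assume "z \<in> Wn (x + real j * h) 1"
    then have a: "\<bar>x + real j * h - real_of_int z\<bar> \<le> 1" by (simp add: Wn_def)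
    have "\<bar>real j * h\<bar> = real j * \<bar>h\<bar>" by (simp add: abs_mult)
    also have "\<dots> \<le> real j * 1" using h by (intro mult_left_mono) auto
    also have "\<dots> \<le> real n" using that by simp
    finally have "\<bar>real j * h\<bar> \<le> real n" .
    then show "z \<in> ?W" using a by (simp add: Wn_def)
  qed
  have "fdiff n h (Fc \<psi> c) x = (\<Sum>j=0..n. (-1) ^ (n - j) * real (n choose j) *
          (\<Sum>z\<in>?W. c z * \<psi> (x + real j * h - real_of_int z)))"
    unfolding fdiff_def
  proof (rule sum.cong[OF refl])
    fix j assume "j \<in> {0..n}"
    then show "(-1) ^ (n - j) * real (n choose j) * Fc \<psi> c (x + real j * h) =
        (-1) ^ (n - j) * real (n choose j) * (\<Sum>z\<in>?W. c z * \<psi> (x + real j * h - real_of_int z))"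
      using Fc_local[OF van Wn_finite sub] by simp
  qed
  also have "\<dots> = (\<Sum>j=0..n. \<Sum>z\<in>?W. c z * ((-1) ^ (n - j) * real (n choose j) *
          \<psi> (x - real_of_int z + real j * h)))"
    by (simp add: sum_distrib_left algebra_simps)
  also have "\<dots> = (\<Sum>z\<in>?W. \<Sum>j=0..n. c z * ((-1) ^ (n - j) * real (n choose j) *
          \<psi> (x - real_of_int z + real j * h)))"
    by (rule sum.swap)
  also have "\<dots> = (\<Sum>z\<in>?W. c z * fdiff n h \<psi> (x - real_of_int z))"
    unfolding fdiff_def by (simp add: sum_distrib_left)
  finally show ?thesis .
qed

lemma abs_fdiff_Fc:
  assumes adm: "admissible_psi \<psi>" and B: "\<And>k x. \<bar>(deriv ^^ k) \<psi> x\<bar> \<le> B k" and h: "\<bar>h\<bar> \<le> 1"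
  shows "\<bar>fdiff n h (Fc \<psi> c) x\<bar> \<le> \<bar>h\<bar> ^ n * B n * (\<Sum>z\<in>Wn x (real n + 1). \<bar>c z\<bar>)"
proof -
  have van: "\<And>y. 1 < \<bar>y\<bar> \<Longrightarrow> \<psi> y = 0" using admissible_zero[OF adm, of _ 0] by simp
  have b: "\<bar>fdiff n h \<psi> y\<bar> \<le> \<bar>h\<bar> ^ n * B n" for y
    using fdiff_psi_bound[OF adm B, of n h 0 y] by simp
  have eq: "fdiff n h (Fc \<psi> c) x = (\<Sum>z\<in>Wn x (real n + 1). c z * fdiff n h \<psi> (x - real_of_int z))"
    using fdiff_Fc[of \<psi> h n c x] van h by blast
  have "\<bar>fdiff n h (Fc \<psi> c) x\<bar> \<le> (\<Sum>z\<in>Wn x (real n + 1). \<bar>c z * fdiff n h \<psi> (x - real_of_int z)\<bar>)"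
    unfolding eq by (rule sum_abs)
  also have "\<dots> \<le> (\<Sum>z\<in>Wn x (real n + 1). \<bar>c z\<bar> * (\<bar>h\<bar> ^ n * B n))"
    by (intro sum_mono) (simp add: abs_mult b mult_left_mono)
  also have "\<dots> = (\<Sum>z\<in>Wn x (real n + 1). \<bar>c z\<bar>) * (\<bar>h\<bar> ^ n * B n)"
    by (rule sum_distrib_right[symmetric])
  also have "\<dots> = \<bar>h\<bar> ^ n * B n * (\<Sum>z\<in>Wn x (real n + 1). \<bar>c z\<bar>)"
    by (rule mult.commute)
  finally show ?thesis .
qed

lemma sum_powr_le:
  fixes a :: "'a \<Rightarrow> real"
  assumes W: "finite W" "real (card W) \<le> N" and a: "\<And>z. a z \<ge> 0" and p: "p > 0"
  shows "(\<Sum>z\<in>W. a z) powr p \<le> N powr p * (\<Sum>z\<in>W. a z powr p)"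
proof (cases "W = {}")
  case True then show ?thesis by simp
next
  case False
  define M where "M = Max (a ` W)"
  have "M \<in> a ` W" unfolding M_def using W False by (intro Max_in) auto
  then obtain z0 where z0: "z0 \<in> W" "M = a z0" by auto
  have le: "a z \<le> M" if "z \<in> W" for z using W that unfolding M_def by auto
  have N0: "N \<ge> 0" using W(2) by (meson of_nat_0_le_iff order_trans)
  have "(\<Sum>z\<in>W. a z) \<le> (\<Sum>z\<in>W. M)" by (rule sum_mono) (rule le)
  also have "\<dots> = real (card W) * M" by simp
  also have "\<dots> \<le> N * M" using W(2) z0 a by (intro mult_right_mono) auto
  finally have "(\<Sum>z\<in>W. a z) powr p \<le> (N * M) powr p"
    using p a by (intro powr_mono2) (auto intro: sum_nonneg)
  also have "\<dots> = N powr p * M powr p" using N0 z0 a by (simp add: powr_mult)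
  also have "M powr p \<le> (\<Sum>z\<in>W. a z powr p)"
    using z0 W by (auto intro!: member_le_sum)
  then have "N powr p * M powr p \<le> N powr p * (\<Sum>z\<in>W. a z powr p)"
    by (rule mult_left_mono) simp
  finally show ?thesis .
qed

lemma int_finite_bound:
  fixes F :: "int set" assumes "finite F" shows "\<exists>N::nat. F \<subseteq> {- int N..int N}"
  using assms
proof (induction F rule: finite_induct)
  case empty then show ?case by simp
next
  case (insert z F)
  then obtain N where N: "F \<subseteq> {- int N..int N}" by blast
  have m: "int N \<le> int (max N (nat \<bar>z\<bar>))" "\<bar>z\<bar> \<le> int (max N (nat \<bar>z\<bar>))" by auto
  show ?case
  proof (intro exI[of _ "max N (nat \<bar>z\<bar>)"] subsetI)
    fix y assume "y \<in> insert z F"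
    then consider "y = z" | "y \<in> F" by blast
    then show "y \<in> {- int (max N (nat \<bar>z\<bar>))..int (max N (nat \<bar>z\<bar>))}"
    proof cases
      case 1 then show ?thesis using m by (simp add: abs_le_iff)
    next
      case 2 then have y: "- int N \<le> y" "y \<le> int N" using N by auto
      have "- int (max N (nat \<bar>z\<bar>)) \<le> y" "y \<le> int (max N (nat \<bar>z\<bar>))"
        using y m(1) by linarith+
      then show ?thesis by simp
    qed
  qed
qed

lemma infsum_int_SUP:
  fixes f :: "int \<Rightarrow> ennreal"
  shows "infsum f UNIV = (SUP N::nat. sum f {- int N..int N})"
proof -
  have "infsum f UNIV = (SUP F\<in>{F. finite F \<and> F \<subseteq> UNIV}. sum f F)"
    by (rule nonneg_infsum_complete) simp
  also have "\<dots> = (SUP N::nat. sum f {- int N..int N})"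
  proof (rule antisym)
    show "(SUP F\<in>{F. finite F \<and> F \<subseteq> UNIV}. sum f F) \<le> (SUP N::nat. sum f {- int N..int N})"
    proof (rule SUP_least)
      fix F :: "int set" assume "F \<in> {F. finite F \<and> F \<subseteq> UNIV}"
      then obtain N where "F \<subseteq> {- int N..int N}" using int_finite_bound by blast
      then have "sum f F \<le> sum f {- int N..int N}" by (intro sum_mono2) auto
      also have "\<dots> \<le> (SUP N::nat. sum f {- int N..int N})" by (rule SUP_upper) simp
      finally show "sum f F \<le> (SUP N::nat. sum f {- int N..int N})" .
    qed
    show "(SUP N::nat. sum f {- int N..int N}) \<le> (SUP F\<in>{F. finite F \<and> F \<subseteq> UNIV}. sum f F)"
      by (rule SUP_least) (rule SUP_upper, simp)
  qed
  finally show ?thesis .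
qed

lemma nn_integral_infsum_int:
  fixes g :: "int \<Rightarrow> 'a \<Rightarrow> ennreal"
  assumes [measurable]: "\<And>z. g z \<in> borel_measurable M"
  shows "(\<integral>\<^sup>+x. (\<Sum>\<^sub>\<infinity> z. g z x) \<partial>M) = (\<Sum>\<^sub>\<infinity> z. \<integral>\<^sup>+x. g z x \<partial>M)"
proof -
  have inc: "incseq (\<lambda>N::nat. \<lambda>x. \<Sum>z\<in>{- int N..int N}. g z x)"
    by (auto simp: incseq_def le_fun_def intro!: sum_mono2)
  have "(\<integral>\<^sup>+x. (\<Sum>\<^sub>\<infinity> z. g z x) \<partial>M) = (\<integral>\<^sup>+x. (SUP N::nat. \<Sum>z\<in>{- int N..int N}. g z x) \<partial>M)"
    by (simp add: infsum_int_SUP)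
  also have "\<dots> = (SUP N::nat. \<integral>\<^sup>+x. (\<Sum>z\<in>{- int N..int N}. g z x) \<partial>M)"
    by (rule nn_integral_monotone_convergence_SUP[OF inc]) simp
  also have "\<dots> = (SUP N::nat. \<Sum>z\<in>{- int N..int N}. \<integral>\<^sup>+x. g z x \<partial>M)"
    by (simp add: nn_integral_sum)
  also have "\<dots> = (\<Sum>\<^sub>\<infinity> z. \<integral>\<^sup>+x. g z x \<partial>M)"
    by (simp add: infsum_int_SUP)
  finally show ?thesis .
qed

lemma infsum_mult_right_int:
  fixes f :: "int \<Rightarrow> ennreal"
  shows "(\<Sum>\<^sub>\<infinity> z. f z * c) = (\<Sum>\<^sub>\<infinity> z. f z) * c"
  by (simp add: infsum_int_SUP sum_distrib_right SUP_mult_right_ennreal)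

lemma infsum_window:
  assumes a: "\<And>z. a z \<ge> 0"
  shows "ennreal (\<Sum>z\<in>Wn x R. a z) =
     (\<Sum>\<^sub>\<infinity> z. ennreal (a z) * indicator {real_of_int z - R..real_of_int z + R} x)"
proof -
  have "(\<Sum>\<^sub>\<infinity> z. ennreal (a z) * indicator {real_of_int z - R..real_of_int z + R} x)
      = (\<Sum>\<^sub>\<infinity> z\<in>Wn x R. ennreal (a z) * indicator {real_of_int z - R..real_of_int z + R} x)"
    by (rule infsum_cong_neutral) (auto simp: Wn_def indicator_def abs_le_iff)
  also have "\<dots> = (\<Sum>z\<in>Wn x R. ennreal (a z) * indicator {real_of_int z - R..real_of_int z + R} x)"
    by simp
  also have "\<dots> = (\<Sum>z\<in>Wn x R. ennreal (a z))"
    by (rule sum.cong) (auto simp: Wn_def indicator_def abs_le_iff)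
  also have "\<dots> = ennreal (\<Sum>z\<in>Wn x R. a z)"
    using a by (simp add: sum_ennreal)
  finally show ?thesis by simp
qed

lemma integral_window:
  assumes R: "R \<ge> 0"
  shows "(\<integral>\<^sup>+x. (\<Sum>\<^sub>\<infinity> z. ennreal (a z) * indicator {real_of_int z - R..real_of_int z + R} x) \<partial>lborel)
       = (\<Sum>\<^sub>\<infinity> z. ennreal (a z)) * ennreal (2 * R)"
proof -
  have "(\<integral>\<^sup>+x. (\<Sum>\<^sub>\<infinity> z. ennreal (a z) * indicator {real_of_int z - R..real_of_int z + R} x) \<partial>lborel)
     = (\<Sum>\<^sub>\<infinity> z. \<integral>\<^sup>+x. ennreal (a z) * indicator {real_of_int z - R..real_of_int z + R} x \<partial>lborel)"
    by (rule nn_integral_infsum_int) simp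
  also have "\<dots> = (\<Sum>\<^sub>\<infinity> z. ennreal (a z) * ennreal (2 * R))"
    using R by (simp add: nn_integral_cmult_indicator)
  also have "\<dots> = (\<Sum>\<^sub>\<infinity> z. ennreal (a z)) * ennreal (2 * R)"
    by (rule infsum_mult_right_int)
  finally show ?thesis .
qed

lemma lp_le1:
  assumes p: "p > 0" and c: "lp_qnorm p c \<le> 1"
  shows "(\<Sum>\<^sub>\<infinity> z. ennreal (\<bar>c z\<bar> powr p)) \<le> 1"
proof -
  let ?S = "(\<Sum>\<^sub>\<infinity> z. ennreal (\<bar>c z\<bar> powr p))"
  have e: "epow ?S (1/p) \<le> 1" using c unfolding lp_qnorm_def .
  have "?S = epow (epow ?S (1/p)) (1 / (1/p))" by (rule epow_inv[symmetric]) (use p in simp)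
  also have "\<dots> \<le> epow 1 (1/(1/p))" by (rule epow_mono[OF _ e]) (use p in simp)
  finally show ?thesis by simp
qed



lemma admissible_B:
  assumes adm: "admissible_psi \<psi>"
  obtains B where "\<And>k. B k \<ge> 0" "\<And>k x. \<bar>(deriv ^^ k) \<psi> x\<bar> \<le> B k"
proof -
  have "\<forall>k. \<exists>b. b \<ge> 0 \<and> (\<forall>x. \<bar>(deriv ^^ k) \<psi> x\<bar> \<le> b)"
    using admissible_bound[OF adm] by simp
  then obtain B where "\<forall>k. B k \<ge> 0 \<and> (\<forall>x. \<bar>(deriv ^^ k) \<psi> x\<bar> \<le> B k)"
    by (rule choice[THEN exE])
  then have "\<And>k. B k \<ge> 0" "\<And>k x. \<bar>(deriv ^^ k) \<psi> x\<bar> \<le> B k" by auto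
  then show ?thesis by (rule that)
qed

lemma Fc_Lp_bound:
  assumes adm: "admissible_psi \<psi>" and p: "p > 0"
  shows "\<exists>A\<ge>0. \<forall>c h. lp_qnorm p c \<le> 1 \<longrightarrow> \<bar>h\<bar> \<le> 1 \<longrightarrow>
            Lp_qnorm p (fdiff n h (Fc \<psi> c)) \<le> ennreal (A * \<bar>h\<bar> ^ n)"
proof -
  obtain B where B0: "\<And>k. B k \<ge> 0" and B: "\<And>k x. \<bar>(deriv ^^ k) \<psi> x\<bar> \<le> B k"
    using admissible_B[OF adm] by blast
  define R where "R = real n + 1"
  define N where "N = 2 * R + 3"
  define A where "A = B n * N * (2 * R) powr (1/p)"
  have R0: "R \<ge> 0" "N \<ge> 0" unfolding N_def R_def by auto
  show ?thesis
  proof (intro exI[of _ A] conjI allI impI)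
    show "A \<ge> 0" unfolding A_def using B0[of n] R0 by simp
    fix c :: "int \<Rightarrow> real" and h :: real assume c: "lp_qnorm p c \<le> 1" and h: "\<bar>h\<bar> \<le> 1"
    define K where "K = (\<bar>h\<bar> ^ n * B n * N) powr p"
    have K0: "K \<ge> 0" unfolding K_def by simp
    let ?a = "\<lambda>z. \<bar>c z\<bar> powr p"
    have pw: "ennreal (\<bar>fdiff n h (Fc \<psi> c) x\<bar> powr p) \<le> ennreal K *
        (\<Sum>\<^sub>\<infinity> z. ennreal (?a z) * indicator {real_of_int z - R..real_of_int z + R} x)" for x
    proof -
      have s0: "(\<Sum>z\<in>Wn x R. \<bar>c z\<bar>) \<ge> 0" by (rule sum_nonneg) simp
      have hb: "\<bar>h\<bar> ^ n * B n \<ge> 0" using B0[of n] by simp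
      have "\<bar>fdiff n h (Fc \<psi> c) x\<bar> powr p \<le> (\<bar>h\<bar> ^ n * B n * (\<Sum>z\<in>Wn x R. \<bar>c z\<bar>)) powr p"
        using abs_fdiff_Fc[OF adm B h, of n c x] p unfolding R_def by (intro powr_mono2) auto
      also have "\<dots> = (\<bar>h\<bar> ^ n * B n) powr p * (\<Sum>z\<in>Wn x R. \<bar>c z\<bar>) powr p"
        by (rule powr_mult)
      also have "\<dots> \<le> (\<bar>h\<bar> ^ n * B n) powr p * (N powr p * (\<Sum>z\<in>Wn x R. ?a z))"
      proof (rule mult_left_mono)
        show "(\<Sum>z\<in>Wn x R. \<bar>c z\<bar>) powr p \<le> N powr p * (\<Sum>z\<in>Wn x R. ?a z)"
          by (rule sum_powr_le) (use p R0 Wn_card[OF R0(1), of x] in \<open>auto simp: N_def\<close>)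
      qed simp
      also have "\<dots> = K * (\<Sum>z\<in>Wn x R. ?a z)"
        unfolding K_def using hb R0 by (simp add: powr_mult)
      finally have r: "\<bar>fdiff n h (Fc \<psi> c) x\<bar> powr p \<le> K * (\<Sum>z\<in>Wn x R. ?a z)" .
      have "ennreal (\<bar>fdiff n h (Fc \<psi> c) x\<bar> powr p) \<le> ennreal (K * (\<Sum>z\<in>Wn x R. ?a z))"
        using r by (rule ennreal_leI)
      also have "\<dots> = ennreal K * ennreal (\<Sum>z\<in>Wn x R. ?a z)"
        using K0 by (rule ennreal_mult')
      also have "ennreal (\<Sum>z\<in>Wn x R. ?a z) =
          (\<Sum>\<^sub>\<infinity> z. ennreal (?a z) * indicator {real_of_int z - R..real_of_int z + R} x)"
        by (rule infsum_window) simp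
      finally show ?thesis .
    qed
    have S: "(\<Sum>\<^sub>\<infinity> z. ennreal (?a z)) \<le> 1" by (rule lp_le1[OF p c])
    have "(\<integral>\<^sup>+x. ennreal (\<bar>fdiff n h (Fc \<psi> c) x\<bar> powr p) \<partial>lborel)
        \<le> (\<integral>\<^sup>+x. ennreal K * (\<Sum>\<^sub>\<infinity> z. ennreal (?a z) * indicator {real_of_int z - R..real_of_int z + R} x) \<partial>lborel)"
      by (rule nn_integral_mono) (rule pw)
    also have "\<dots> = ennreal K * (\<integral>\<^sup>+x. (\<Sum>\<^sub>\<infinity> z. ennreal (?a z) * indicator {real_of_int z - R..real_of_int z + R} x) \<partial>lborel)"
      by (rule nn_integral_cmult_gen) simp
    also have "\<dots> = ennreal K * ((\<Sum>\<^sub>\<infinity> z. ennreal (?a z)) * ennreal (2 * R))"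
      using R0 by (simp add: integral_window)
    also have "\<dots> \<le> ennreal K * (1 * ennreal (2 * R))"
      by (intro mult_left_mono mult_right_mono S) auto
    also have "\<dots> = ennreal (K * (2 * R))"
      using K0 R0 by (simp add: ennreal_mult)
    finally have I: "(\<integral>\<^sup>+x. ennreal (\<bar>fdiff n h (Fc \<psi> c) x\<bar> powr p) \<partial>lborel) \<le> ennreal (K * (2 * R))" .
    have "Lp_qnorm p (fdiff n h (Fc \<psi> c)) \<le> epow (ennreal (K * (2 * R))) (1/p)"
      unfolding Lp_qnorm_def by (rule epow_mono[OF _ I]) (use p in simp)
    also have "\<dots> = ennreal ((K * (2 * R)) powr (1/p))"
      by (rule epow_ennreal) (use K0 R0 in simp)
    also have "(K * (2 * R)) powr (1/p) = K powr (1/p) * (2 * R) powr (1/p)"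
      using K0 R0 by (simp add: powr_mult)
    also have "K powr (1/p) = \<bar>h\<bar> ^ n * B n * N"
      unfolding K_def using p B0[of n] R0 by (simp add: powr_powr)
    finally show "Lp_qnorm p (fdiff n h (Fc \<psi> c)) \<le> ennreal (A * \<bar>h\<bar> ^ n)"
      by (simp add: A_def mult_ac)
  qed
qed

lemma admissible_measurable:
  assumes adm: "admissible_psi \<psi>" shows "\<psi> \<in> borel_measurable borel"
  using admissible_cont[OF adm, of 0] by (simp add: borel_measurable_continuous_onI)

lemma Fc_measurable:
  assumes adm: "admissible_psi \<psi>" shows "Fc \<psi> c \<in> borel_measurable borel"
proof (rule borel_measurable_LIMSEQ_real[where u = "\<lambda>N x. \<Sum>z\<in>{- int N..int N}. c z * \<psi> (x - real_of_int z)"])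
  fix x
  have van: "\<And>y. 1 < \<bar>y\<bar> \<Longrightarrow> \<psi> y = 0" using admissible_zero[OF adm, of _ 0] by simp
  have "eventually (\<lambda>N. (\<Sum>z\<in>{- int N..int N}. c z * \<psi> (x - real_of_int z)) = Fc \<psi> c x) sequentially"
  proof (rule eventually_sequentiallyI[of "nat \<lceil>\<bar>x\<bar>\<rceil> + 1"])
    fix N assume N: "nat \<lceil>\<bar>x\<bar>\<rceil> + 1 \<le> N"
    have "Wn x 1 \<subseteq> {- int N..int N}"
    proof
      fix z assume "z \<in> Wn x 1"
      then have z: "\<bar>x - real_of_int z\<bar> \<le> 1" by (simp add: Wn_def)
      have "real_of_int \<bar>z\<bar> \<le> \<bar>x\<bar> + 1" using z by linarith
      also have "\<dots> \<le> real_of_int \<lceil>\<bar>x\<bar>\<rceil> + 1" by linarith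
      also have "\<dots> \<le> real N" using N by linarith
      finally have "\<bar>z\<bar> \<le> int N" by linarith
      then show "z \<in> {- int N..int N}" by (simp add: abs_le_iff)
    qed
    then show "(\<Sum>z\<in>{- int N..int N}. c z * \<psi> (x - real_of_int z)) = Fc \<psi> c x"
      using Fc_local[OF van, where W = "{- int N..int N}" and y = x and c = c] by simp
  qed
  then show "(\<lambda>N. \<Sum>z\<in>{- int N..int N}. c z * \<psi> (x - real_of_int z)) \<longlonglongrightarrow> Fc \<psi> c x"
    by (rule tendsto_eventually)
next
  fix N :: nat
  have [measurable]: "\<psi> \<in> borel_measurable borel" by (rule admissible_measurable[OF adm])
  show "(\<lambda>x. \<Sum>z\<in>{- int N..int N}. c z * \<psi> (x - real_of_int z)) \<in> borel_measurable borel"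
    by measurable
qed

lemma int_powr_sym:
  assumes b: "b > 0"
  shows "(\<integral>\<^sup>+h. indicator {h. \<bar>h\<bar> \<le> 1} h * ennreal (\<bar>h\<bar> powr (b - 1)) \<partial>lborel) = ennreal (2 / b)"
proof -
  let ?g = "\<lambda>x::real. \<bar>x\<bar> powr (b - 1)"
  have r: "((\<lambda>x. x powr (b - 1)) has_integral (1 / b)) {0..1}"
    using has_integral_powr_from_0[of "b - 1" 1] b by simp
  have r1: "(?g has_integral (1 / b)) {0..1}"
    by (rule has_integral_eq[OF _ r]) simp
  have l1: "(?g has_integral (1 / b)) {-1..0}"
    using has_integral_reflect_real[where f = ?g and i = "1/b" and a = 0 and b = 1] r1 by simp
  have "(?g has_integral (1 / b + 1 / b)) {-1..1}"
    by (rule has_integral_combine[OF _ _ l1 r1]) auto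
  then have "(?g has_integral (2 / b)) {-1..1}" by simp
  then have "((\<lambda>x. if x \<in> {-1..1} then ?g x else 0) has_integral (2 / b)) UNIV"
    by (simp only: has_integral_restrict_UNIV)
  then have "integral\<^sup>N lborel (\<lambda>x. if x \<in> {-1..1} then ?g x else 0) = ennreal (2 / b)"
    by (rule nn_integral_has_integral_lborel[rotated 2]) auto
  moreover have "(\<integral>\<^sup>+h. indicator {h. \<bar>h\<bar> \<le> 1} h * ennreal (\<bar>h\<bar> powr (b - 1)) \<partial>lborel)
      = integral\<^sup>N lborel (\<lambda>x. if x \<in> {-1..1} then ?g x else 0)"
    by (rule nn_integral_cong) (auto simp: indicator_def abs_le_iff)
  ultimately show ?thesis by simp
qed



lemma besov_m_gt: assumes s: "s > 0" shows "real (besov_m s) > s"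
proof -
  have "\<lfloor>s\<rfloor> \<ge> 0" using s by simp
  then have eq: "real (nat \<lfloor>s\<rfloor> + 1) = real_of_int \<lfloor>s\<rfloor> + 1" by simp
  show ?thesis unfolding besov_m_def using eq real_of_int_floor_add_one_gt[of s] by linarith
qed

lemma Fc_besov_bound:
  assumes adm: "admissible_psi \<psi>" and p: "p > 0" and q: "q > 0" and s: "s > 0"
  shows "\<exists>K\<ge>0. \<forall>c. lp_qnorm p c \<le> 1 \<longrightarrow> besov_qnorm p q s (Fc \<psi> c) \<le> ennreal K"
proof -
  define m where "m = besov_m s"
  have ms: "real m > s" unfolding m_def using s by (rule besov_m_gt)
  obtain A0 where A0: "A0 \<ge> 0" "\<And>c h. lp_qnorm p c \<le> 1 \<Longrightarrow> \<bar>h\<bar> \<le> 1 \<Longrightarrow>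
      Lp_qnorm p (fdiff 0 h (Fc \<psi> c)) \<le> ennreal (A0 * \<bar>h\<bar> ^ 0)"
    using Fc_Lp_bound[OF adm p, of 0] by auto
  obtain A where A: "A \<ge> 0" "\<And>c h. lp_qnorm p c \<le> 1 \<Longrightarrow> \<bar>h\<bar> \<le> 1 \<Longrightarrow>
      Lp_qnorm p (fdiff m h (Fc \<psi> c)) \<le> ennreal (A * \<bar>h\<bar> ^ m)"
    using Fc_Lp_bound[OF adm p, of m] by auto
  have L0: "Lp_qnorm p (Fc \<psi> c) \<le> ennreal A0" if "lp_qnorm p c \<le> 1" for c
  proof -
    have e: "fdiff 0 0 (Fc \<psi> c) = Fc \<psi> c" by (rule ext) simp
    show ?thesis using A0(2)[OF that, of 0] by (simp add: e)
  qed
  have hm: "\<bar>h\<bar> powr (-s) * \<bar>h\<bar> ^ m \<le> 1" if "0 < \<bar>h\<bar>" "\<bar>h\<bar> \<le> 1" for h :: real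
  proof -
    have "\<bar>h\<bar> powr (-s) * \<bar>h\<bar> ^ m = \<bar>h\<bar> powr (-s) * \<bar>h\<bar> powr (real m)"
      using that by (simp add: powr_realpow)
    also have "\<dots> = \<bar>h\<bar> powr (-s + real m)" by (rule powr_add[symmetric])
    also have "\<dots> \<le> 1" using that ms by (intro powr_le1) auto
    finally show ?thesis .
  qed
  show ?thesis
  proof (cases "q = \<infinity>")
    case True
    show ?thesis
    proof (intro exI[of _ "A0 + A"] conjI allI impI)
      show "A0 + A \<ge> 0" using A0 A by simp
      fix c assume c: "lp_qnorm p c \<le> 1"
      have S: "(SUP h \<in> {h. 0 < \<bar>h\<bar> \<and> \<bar>h\<bar> \<le> 1}. ennreal (\<bar>h\<bar> powr (-s)) * Lp_qnorm p (fdiff m h (Fc \<psi> c)))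
          \<le> ennreal A"
      proof (rule SUP_least)
        fix h :: real assume "h \<in> {h. 0 < \<bar>h\<bar> \<and> \<bar>h\<bar> \<le> 1}"
        then have h: "0 < \<bar>h\<bar>" "\<bar>h\<bar> \<le> 1" by auto
        have "ennreal (\<bar>h\<bar> powr (-s)) * Lp_qnorm p (fdiff m h (Fc \<psi> c))
            \<le> ennreal (\<bar>h\<bar> powr (-s)) * ennreal (A * \<bar>h\<bar> ^ m)"
          by (rule mult_left_mono[OF A(2)[OF c h(2)]]) simp
        also have "\<dots> = ennreal (\<bar>h\<bar> powr (-s) * (A * \<bar>h\<bar> ^ m))"
          by (rule ennreal_mult'[symmetric]) simp
        also have "\<bar>h\<bar> powr (-s) * (A * \<bar>h\<bar> ^ m) = A * (\<bar>h\<bar> powr (-s) * \<bar>h\<bar> ^ m)"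
          by (simp add: mult_ac)
        also have "\<dots> \<le> A * 1" by (rule mult_left_mono[OF hm[OF h] A(1)])
        finally show "ennreal (\<bar>h\<bar> powr (-s)) * Lp_qnorm p (fdiff m h (Fc \<psi> c)) \<le> ennreal A"
          by (simp add: ennreal_leI)
      qed
      have "besov_qnorm p q s (Fc \<psi> c) \<le> ennreal A0 + ennreal A"
        unfolding besov_qnorm_def m_def[symmetric] using True L0[OF c] S by (simp add: add_mono)
      also have "\<dots> = ennreal (A0 + A)" using A0 A by simp
      finally show "besov_qnorm p q s (Fc \<psi> c) \<le> ennreal (A0 + A)" .
    qed
  next
    case False
    define Q where "Q = enn2real q"
    have Q: "Q > 0" using q False by (simp add: Q_def enn2real_positive_iff less_top)
    define b where "b = (real m - s) * Q"
    have b: "b > 0" using ms Q by (simp add: b_def)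
    define K where "K = A0 + (A powr Q * (2 / b)) powr (1/Q)"
    show ?thesis
    proof (intro exI[of _ K] conjI allI impI)
      show "K \<ge> 0" unfolding K_def using A0 by simp
      fix c assume c: "lp_qnorm p c \<le> 1"
      have pw: "indicator {h. \<bar>h\<bar> \<le> 1} h * ennreal (\<bar>h\<bar> powr (- s * Q) / \<bar>h\<bar>) *
              epow (Lp_qnorm p (fdiff m h (Fc \<psi> c))) Q
          \<le> ennreal (A powr Q) * (indicator {h. \<bar>h\<bar> \<le> 1} h * ennreal (\<bar>h\<bar> powr (b - 1)))" for h :: real
      proof (cases "h = 0 \<or> \<bar>h\<bar> > 1")
        case True then show ?thesis by (auto simp: indicator_def)
      next
        case False
        then have h: "0 < \<bar>h\<bar>" "\<bar>h\<bar> \<le> 1" by auto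
        have "epow (Lp_qnorm p (fdiff m h (Fc \<psi> c))) Q \<le> epow (ennreal (A * \<bar>h\<bar> ^ m)) Q"
          by (rule epow_mono[OF Q A(2)[OF c h(2)]])
        also have "\<dots> = ennreal ((A * \<bar>h\<bar> ^ m) powr Q)" by (rule epow_ennreal) (use A in simp)
        finally have e: "epow (Lp_qnorm p (fdiff m h (Fc \<psi> c))) Q \<le> ennreal ((A * \<bar>h\<bar> ^ m) powr Q)" .
        have "indicator {h. \<bar>h\<bar> \<le> 1} h * ennreal (\<bar>h\<bar> powr (- s * Q) / \<bar>h\<bar>) *
              epow (Lp_qnorm p (fdiff m h (Fc \<psi> c))) Q
            = ennreal (\<bar>h\<bar> powr (- s * Q) / \<bar>h\<bar>) * epow (Lp_qnorm p (fdiff m h (Fc \<psi> c))) Q"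
          using h by (simp add: indicator_def)
        also have "\<dots> \<le> ennreal (\<bar>h\<bar> powr (- s * Q) / \<bar>h\<bar>) * ennreal ((A * \<bar>h\<bar> ^ m) powr Q)"
          by (rule mult_left_mono[OF e]) simp
        also have "\<dots> = ennreal (\<bar>h\<bar> powr (- s * Q) / \<bar>h\<bar> * (A * \<bar>h\<bar> ^ m) powr Q)"
          by (rule ennreal_mult'[symmetric]) simp
        also have "\<bar>h\<bar> powr (- s * Q) / \<bar>h\<bar> * (A * \<bar>h\<bar> ^ m) powr Q = A powr Q * \<bar>h\<bar> powr (b - 1)"
        proof -
          have e1: "(A * \<bar>h\<bar> ^ m) powr Q = A powr Q * (\<bar>h\<bar> ^ m) powr Q" by (rule powr_mult)
          have e2: "(\<bar>h\<bar> ^ m) powr Q = \<bar>h\<bar> powr (real m * Q)"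
            using h by (simp add: powr_realpow[symmetric] powr_powr)
          have e3: "\<bar>h\<bar> powr (- s * Q) / \<bar>h\<bar> = \<bar>h\<bar> powr (- s * Q - 1)"
            using h by (simp add: powr_diff)
          have e4: "\<bar>h\<bar> powr (- s * Q - 1) * \<bar>h\<bar> powr (real m * Q) = \<bar>h\<bar> powr (b - 1)"
            by (simp add: powr_add[symmetric] b_def algebra_simps)
          show ?thesis unfolding e1 e2 e3 using e4 by (simp add: mult_ac)
        qed
        also have "ennreal (A powr Q * \<bar>h\<bar> powr (b - 1)) =
            ennreal (A powr Q) * (indicator {h. \<bar>h\<bar> \<le> 1} h * ennreal (\<bar>h\<bar> powr (b - 1)))"
          using h by (simp add: indicator_def ennreal_mult)
        finally show ?thesis .
      qed
      have "(\<integral>\<^sup>+ h. indicator {h. \<bar>h\<bar> \<le> 1} h * ennreal (\<bar>h\<bar> powr (- s * Q) / \<bar>h\<bar>) *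
              epow (Lp_qnorm p (fdiff m h (Fc \<psi> c))) Q \<partial>lborel)
          \<le> (\<integral>\<^sup>+ h. ennreal (A powr Q) * (indicator {h. \<bar>h\<bar> \<le> 1} h * ennreal (\<bar>h\<bar> powr (b - 1))) \<partial>lborel)"
        by (rule nn_integral_mono) (rule pw)
      also have "\<dots> = ennreal (A powr Q) * (\<integral>\<^sup>+ h. indicator {h. \<bar>h\<bar> \<le> 1} h * ennreal (\<bar>h\<bar> powr (b - 1)) \<partial>lborel)"
        by (rule nn_integral_cmult_gen) simp
      also have "\<dots> = ennreal (A powr Q) * ennreal (2 / b)" by (simp add: int_powr_sym[OF b])
      also have "\<dots> = ennreal (A powr Q * (2 / b))" by (rule ennreal_mult'[symmetric]) simp
      finally have I: "(\<integral>\<^sup>+ h. indicator {h. \<bar>h\<bar> \<le> 1} h * ennreal (\<bar>h\<bar> powr (- s * Q) / \<bar>h\<bar>) *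
              epow (Lp_qnorm p (fdiff m h (Fc \<psi> c))) Q \<partial>lborel) \<le> ennreal (A powr Q * (2 / b))" .
      have "epow (\<integral>\<^sup>+ h. indicator {h. \<bar>h\<bar> \<le> 1} h * ennreal (\<bar>h\<bar> powr (- s * Q) / \<bar>h\<bar>) *
              epow (Lp_qnorm p (fdiff m h (Fc \<psi> c))) Q \<partial>lborel) (1 / Q)
          \<le> epow (ennreal (A powr Q * (2 / b))) (1 / Q)"
        by (rule epow_mono[OF _ I]) (use Q in simp)
      also have "\<dots> = ennreal ((A powr Q * (2 / b)) powr (1 / Q))"
        by (rule epow_ennreal) (use b in simp)
      finally have T: "epow (\<integral>\<^sup>+ h. indicator {h. \<bar>h\<bar> \<le> 1} h * ennreal (\<bar>h\<bar> powr (- s * Q) / \<bar>h\<bar>) *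
              epow (Lp_qnorm p (fdiff m h (Fc \<psi> c))) Q \<partial>lborel) (1 / Q)
          \<le> ennreal ((A powr Q * (2 / b)) powr (1 / Q))" .
      have "besov_qnorm p q s (Fc \<psi> c) \<le> ennreal A0 + ennreal ((A powr Q * (2 / b)) powr (1 / Q))"
        unfolding besov_qnorm_def m_def[symmetric] Q_def[symmetric] using False L0[OF c] T
        by (simp add: add_mono)
      also have "\<dots> = ennreal K" unfolding K_def using A0 by simp
      finally show "besov_qnorm p q s (Fc \<psi> c) \<le> ennreal K" .
    qed
  qed
qed



lemma Lp_le_besov: "Lp_qnorm p f \<le> besov_qnorm p q s f"
  unfolding besov_qnorm_def by simp

lemma pow_powr: "((a::real) ^ k) powr p = (a powr p) ^ k"
  by (induction k) (simp_all add: powr_mult)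

lemma besov_space_scale:
  assumes p: "p > 0" and q: "q > 0" and f: "f \<in> besov_space p q s"
  shows "(\<lambda>x. t * f x) \<in> besov_space p q s \<and> besov_qnorm p q s (\<lambda>x. t * f x) = ennreal \<bar>t\<bar> * besov_qnorm p q s f"
proof -
  have [measurable]: "f \<in> borel_measurable lborel" and fin: "besov_qnorm p q s f < \<infinity>"
    using f by (auto simp: besov_space_def)
  have e: "besov_qnorm p q s (\<lambda>x. t * f x) = ennreal \<bar>t\<bar> * besov_qnorm p q s f"
    by (rule besov_scale[OF p q])
  have "ennreal \<bar>t\<bar> * besov_qnorm p q s f < \<infinity>"
    using fin by (simp add: ennreal_mult_less_top)
  then have "(\<lambda>x. t * f x) \<in> besov_space p q s"
    unfolding besov_space_def using e by simp
  then show ?thesis using e by simp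
qed

lemma mult_ineq:
  assumes p: "p > 0" and q: "q > 0"
    and g: "g \<in> borel_measurable lborel"
    and Mfin: "mult_qnorm (besov_space p q s) (besov_qnorm p q s) g < \<infinity>"
    and f: "f \<in> besov_space p q s"
  shows "(\<lambda>x. g x * f x) \<in> besov_space p q s \<and>
    besov_qnorm p q s (\<lambda>x. g x * f x) \<le> mult_qnorm (besov_space p q s) (besov_qnorm p q s) g * besov_qnorm p q s f"
proof -
  define Mg where "Mg = mult_qnorm (besov_space p q s) (besov_qnorm p q s) g"
  let ?N = "besov_qnorm p q s"
  have key: "?N (\<lambda>x. g x * f' x) \<le> Mg" if "f' \<in> besov_space p q s" "?N f' \<le> 1" for f'
    unfolding Mg_def mult_qnorm_def by (rule SUP_upper) (use that in auto)
  have fm: "f \<in> borel_measurable lborel" and ff: "?N f < \<infinity>" using f by (auto simp: besov_space_def)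
  have gfm: "(\<lambda>x. g x * f x) \<in> borel_measurable lborel" using g fm by (rule borel_measurable_times)
  have sc: "(\<lambda>x. g x * (t * f x)) = (\<lambda>x. t * (g x * f x))" for t :: real by (auto simp: mult_ac)
  have tle: "ennreal t * ?N (\<lambda>x. g x * f x) \<le> Mg" if t: "t > 0" "ennreal t * ?N f \<le> 1" for t :: real
  proof -
    have "(\<lambda>x. t * f x) \<in> besov_space p q s" "?N (\<lambda>x. t * f x) = ennreal t * ?N f"
      using besov_space_scale[OF p q f, of t] t by auto
    then have "?N (\<lambda>x. g x * (t * f x)) \<le> Mg" using key t by simp
    then show ?thesis unfolding sc using besov_scale[OF p q, where t = t and f = "\<lambda>x. g x * f x" and s = s] t by simp
  qed
  obtain v where v: "?N f = ennreal v" "v \<ge> 0" using ff by (cases "?N f") auto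
  obtain mg where mg: "Mg = ennreal mg" "mg \<ge> 0" using Mfin unfolding Mg_def[symmetric]
    by (cases Mg) auto
  have le: "?N (\<lambda>x. g x * f x) \<le> Mg * ?N f"
  proof (cases "v = 0")
    case True
    have "?N (\<lambda>x. g x * f x) = 0"
    proof (rule ccontr)
      assume nz: "?N (\<lambda>x. g x * f x) \<noteq> 0"
      show False
      proof (cases "?N (\<lambda>x. g x * f x) = \<infinity>")
        case True
        have "ennreal 1 * ?N (\<lambda>x. g x * f x) \<le> Mg" by (rule tle) (use v \<open>v = 0\<close> in auto)
        then show False using True mg by (simp add: top_unique)
      next
        case False
        then obtain w where w: "?N (\<lambda>x. g x * f x) = ennreal w" "w \<ge> 0" by (cases "?N (\<lambda>x. g x * f x)") auto
        then have w0: "w > 0" using nz by (cases "w = 0") auto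
        define t where "t = (mg + 1) / w"
        have t: "t > 0" unfolding t_def using w0 mg by simp
        have "ennreal t * ?N (\<lambda>x. g x * f x) \<le> Mg" by (rule tle[OF t]) (use v \<open>v = 0\<close> in auto)
        then have "ennreal (t * w) \<le> ennreal mg" using w mg t by (simp add: ennreal_mult)
        then have "t * w \<le> mg" using mg by simp
        moreover have "t * w = mg + 1" unfolding t_def using w0 by simp
        ultimately show False by simp
      qed
    qed
    then show ?thesis by simp
  next
    case False
    then have v0: "v > 0" using v by simp
    define t where "t = 1 / v"
    have t: "t > 0" unfolding t_def using v0 by simp
    have "ennreal t * ?N f = 1" using v v0 by (simp add: t_def ennreal_mult[symmetric])
    then have a: "ennreal t * ?N (\<lambda>x. g x * f x) \<le> Mg" by (intro tle t) simp
    have "?N (\<lambda>x. g x * f x) = ennreal v * (ennreal t * ?N (\<lambda>x. g x * f x))"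
      using v0 by (simp add: t_def mult.assoc[symmetric] ennreal_mult[symmetric])
    also have "\<dots> \<le> ennreal v * Mg" using a by (rule mult_left_mono) simp
    finally show ?thesis using v by (simp add: mult.commute)
  qed
  have "?N (\<lambda>x. g x * f x) < \<infinity>"
    using le mg v by (auto simp: ennreal_mult[symmetric] intro: le_less_trans)
  then have "(\<lambda>x. g x * f x) \<in> besov_space p q s" using gfm by (simp add: besov_space_def)
  then show ?thesis using le unfolding Mg_def by simp
qed

lemma mult_power:
  assumes p: "p > 0" and q: "q > 0"
    and g: "g \<in> borel_measurable lborel"
    and Mfin: "mult_qnorm (besov_space p q s) (besov_qnorm p q s) g < \<infinity>"
    and f: "f \<in> besov_space p q s"
  shows "(\<lambda>x. g x ^ k * f x) \<in> besov_space p q s \<and>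
    besov_qnorm p q s (\<lambda>x. g x ^ k * f x) \<le> mult_qnorm (besov_space p q s) (besov_qnorm p q s) g ^ k * besov_qnorm p q s f"
proof (induction k)
  case 0 then show ?case using f by simp
next
  case (Suc k)
  let ?Mg = "mult_qnorm (besov_space p q s) (besov_qnorm p q s) g"
  have e: "(\<lambda>x. g x ^ Suc k * f x) = (\<lambda>x. g x * (g x ^ k * f x))" by (auto simp: mult_ac)
  have m: "(\<lambda>x. g x * (g x ^ k * f x)) \<in> besov_space p q s \<and>
    besov_qnorm p q s (\<lambda>x. g x * (g x ^ k * f x)) \<le> ?Mg * besov_qnorm p q s (\<lambda>x. g x ^ k * f x)"
    by (rule mult_ineq[OF p q g Mfin]) (use Suc.IH in blast)
  have "?Mg * besov_qnorm p q s (\<lambda>x. g x ^ k * f x) \<le> ?Mg * (?Mg ^ k * besov_qnorm p q s f)"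
    using Suc.IH by (intro mult_left_mono) auto
  also have "\<dots> = ?Mg ^ Suc k * besov_qnorm p q s f" by (simp add: mult.assoc)
  finally have b: "?Mg * besov_qnorm p q s (\<lambda>x. g x ^ k * f x) \<le> ?Mg ^ Suc k * besov_qnorm p q s f" .
  have "besov_qnorm p q s (\<lambda>x. g x * (g x ^ k * f x)) \<le> ?Mg ^ Suc k * besov_qnorm p q s f"
    using m b by (blast intro: order.trans)
  then show ?case using m unfolding e by blast
qed

lemma Fc_delta: "Fc \<psi> (\<lambda>w. if w = z then 1 else 0) = (\<lambda>x. \<psi> (x - real_of_int z))"
proof
  fix x
  have "Fc \<psi> (\<lambda>w. if w = z then 1 else 0) x =
      (\<Sum>\<^sub>\<infinity> w\<in>{z}. (if w = z then 1 else 0) * \<psi> (x - real_of_int w))"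
    unfolding Fc_def by (rule infsum_cong_neutral) auto
  then show "Fc \<psi> (\<lambda>w. if w = z then 1 else 0) x = \<psi> (x - real_of_int z)" by simp
qed

lemma lp_delta: assumes p: "p > 0" shows "lp_qnorm p (\<lambda>w. if w = z then 1 else 0) = 1"
proof -
  have "(\<Sum>\<^sub>\<infinity> w. ennreal (\<bar>if w = z then 1 else 0\<bar> powr p)) =
      (\<Sum>\<^sub>\<infinity> w\<in>{z}. ennreal (\<bar>if w = z then 1 else 0\<bar> powr p))"
    by (rule infsum_cong_neutral) auto
  also have "\<dots> = 1" by simp
  finally show ?thesis unfolding lp_qnorm_def by simp
qed

lemma psi_shift_space:
  assumes adm: "admissible_psi \<psi>" and p: "p > 0" and K: "\<forall>c. lp_qnorm p c \<le> 1 \<longrightarrow> besov_qnorm p q s (Fc \<psi> c) \<le> ennreal K"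
  shows "(\<lambda>x. \<psi> (x - real_of_int z)) \<in> besov_space p q s \<and> besov_qnorm p q s (\<lambda>x. \<psi> (x - real_of_int z)) \<le> ennreal K"
proof -
  have "besov_qnorm p q s (Fc \<psi> (\<lambda>w. if w = z then 1 else 0)) \<le> ennreal K"
    using K lp_delta[OF p, of z] by simp
  then have b: "besov_qnorm p q s (\<lambda>x. \<psi> (x - real_of_int z)) \<le> ennreal K"
    by (simp only: Fc_delta)
  have [measurable]: "\<psi> \<in> borel_measurable borel" by (rule admissible_measurable[OF adm])
  have "(\<lambda>x. \<psi> (x - real_of_int z)) \<in> borel_measurable lborel" by measurable
  then show ?thesis using b by (auto simp: besov_space_def intro: le_less_trans)
qed



lemma ennreal_powr_zero: "y \<ge> 0 \<Longrightarrow> p > 0 \<Longrightarrow> ennreal (y powr p) = 0 \<Longrightarrow> y = (0::real)"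
  by (simp add: ennreal_eq_0_iff)

lemma mult_bounded:
  assumes adm: "admissible_psi \<psi>" and p: "p > 0" and q: "q > 0" and s: "s > 0"
    and g: "g \<in> borel_measurable lborel"
    and Mfin: "mult_qnorm (besov_space p q s) (besov_qnorm p q s) g < \<infinity>"
  shows "AE x in lborel. \<bar>g x\<bar> \<le> enn2real (mult_qnorm (besov_space p q s) (besov_qnorm p q s) g) + 1"
proof -
  let ?Mg = "mult_qnorm (besov_space p q s) (besov_qnorm p q s) g"
  obtain K where K0: "K \<ge> 0" and K: "\<forall>c. lp_qnorm p c \<le> 1 \<longrightarrow> besov_qnorm p q s (Fc \<psi> c) \<le> ennreal K"
    using Fc_besov_bound[OF adm p q s] by auto
  obtain m where m: "?Mg = ennreal m" "m \<ge> 0" using Mfin by (cases ?Mg) auto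
  have mm: "enn2real ?Mg = m" using m by simp
  define u where "u = (m + 1) powr p"
  define w where "w = m powr p"
  define Kp where "Kp = K powr p"
  have u0: "u > 0" unfolding u_def using m by simp
  have w0: "w \<ge> 0" unfolding w_def by simp
  have wu: "w < u" unfolding u_def w_def using m p by (intro powr_less_mono2) auto
  have [measurable]: "g \<in> borel_measurable lborel" by (rule g)
  have [measurable]: "\<psi> \<in> borel_measurable borel" by (rule admissible_measurable[OF adm])
  have psi0: "\<And>y. \<psi> y \<ge> 0" using adm by (simp add: admissible_psi_def)
  have null: "AE x in lborel. m + 1 < \<bar>g x\<bar> \<longrightarrow> \<psi> (x - real_of_int z) = 0" for z :: int
  proof -
    let ?A = "{x. m + 1 < \<bar>g x\<bar>}"
    let ?h = "\<lambda>x. indicator ?A x * ennreal (\<psi> (x - real_of_int z) powr p)"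
    define J where "J = (\<integral>\<^sup>+x. ?h x \<partial>lborel)"
    have ps: "(\<lambda>x. \<psi> (x - real_of_int z)) \<in> besov_space p q s"
        "besov_qnorm p q s (\<lambda>x. \<psi> (x - real_of_int z)) \<le> ennreal K"
      using psi_shift_space[OF adm p K, of z] by auto
    have Jk: "J \<le> ennreal ((w / u) ^ k * Kp)" for k
    proof -
      let ?F = "\<lambda>x. g x ^ k * \<psi> (x - real_of_int z)"
      have mp: "besov_qnorm p q s ?F \<le> ?Mg ^ k * besov_qnorm p q s (\<lambda>x. \<psi> (x - real_of_int z))"
        using mult_power[OF p q g Mfin ps(1), of k] by auto
      have "Lp_qnorm p ?F \<le> besov_qnorm p q s ?F" by (rule Lp_le_besov)
      also have "\<dots> \<le> ?Mg ^ k * besov_qnorm p q s (\<lambda>x. \<psi> (x - real_of_int z))" by (rule mp)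
      also have "\<dots> \<le> ennreal m ^ k * ennreal K" unfolding m(1) by (rule mult_left_mono[OF ps(2)]) simp
      also have "\<dots> = ennreal (m ^ k * K)" using m K0 by (simp add: ennreal_mult ennreal_power)
      finally have L: "Lp_qnorm p ?F \<le> ennreal (m ^ k * K)" .
      have "(\<integral>\<^sup>+x. ennreal (\<bar>?F x\<bar> powr p) \<partial>lborel) = epow (Lp_qnorm p ?F) (1 / (1 / p))"
        unfolding Lp_qnorm_def by (rule epow_inv[symmetric]) (use p in simp)
      also have "\<dots> \<le> epow (ennreal (m ^ k * K)) (1 / (1 / p))"
        by (rule epow_mono[OF _ L]) (use p in simp)
      also have "\<dots> = ennreal ((m ^ k * K) powr p)"
        using p m K0 by (simp add: epow_ennreal)
      also have "(m ^ k * K) powr p = w ^ k * Kp"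
        unfolding w_def Kp_def by (simp add: powr_mult pow_powr)
      finally have I: "(\<integral>\<^sup>+x. ennreal (\<bar>?F x\<bar> powr p) \<partial>lborel) \<le> ennreal (w ^ k * Kp)" .
      have pw: "ennreal (u ^ k) * ?h x \<le> ennreal (\<bar>?F x\<bar> powr p)" for x
      proof (cases "x \<in> ?A")
        case True
        then have gx: "m + 1 < \<bar>g x\<bar>" by simp
        have "u \<le> \<bar>g x\<bar> powr p" unfolding u_def using gx m p by (intro powr_mono2) auto
        then have uk: "u ^ k \<le> (\<bar>g x\<bar> powr p) ^ k" using u0 by (intro power_mono) auto
        have "\<bar>?F x\<bar> powr p = (\<bar>g x\<bar> powr p) ^ k * \<psi> (x - real_of_int z) powr p"
          using psi0 by (simp add: abs_mult power_abs powr_mult pow_powr)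
        moreover have "u ^ k * \<psi> (x - real_of_int z) powr p \<le> (\<bar>g x\<bar> powr p) ^ k * \<psi> (x - real_of_int z) powr p"
          using uk by (rule mult_right_mono) simp
        ultimately have r: "u ^ k * \<psi> (x - real_of_int z) powr p \<le> \<bar>?F x\<bar> powr p" by simp
        have "ennreal (u ^ k) * ?h x = ennreal (u ^ k * \<psi> (x - real_of_int z) powr p)"
          using True u0 by (simp add: ennreal_mult)
        also have "\<dots> \<le> ennreal (\<bar>?F x\<bar> powr p)" using r by (rule ennreal_leI)
        finally show ?thesis .
      next
        case False then show ?thesis by simp
      qed
      have "ennreal (u ^ k) * J = (\<integral>\<^sup>+x. ennreal (u ^ k) * ?h x \<partial>lborel)"
        unfolding J_def by (rule nn_integral_cmult_gen[symmetric]) simp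
      also have "\<dots> \<le> (\<integral>\<^sup>+x. ennreal (\<bar>?F x\<bar> powr p) \<partial>lborel)" by (rule nn_integral_mono) (rule pw)
      also have "\<dots> \<le> ennreal (w ^ k * Kp)" by (rule I)
      finally have uJ: "ennreal (u ^ k) * J \<le> ennreal (w ^ k * Kp)" .
      have uk0: "u ^ k > 0" using u0 by simp
      have one0: "1 / u ^ k * u ^ k = 1" using uk0 u0 by simp
      have "ennreal (1 / u ^ k) * ennreal (u ^ k) = ennreal (1 / u ^ k * u ^ k)"
        by (rule ennreal_mult'[symmetric]) (use uk0 in simp)
      then have one: "ennreal (1 / u ^ k) * ennreal (u ^ k) = 1" unfolding one0 by simp
      have "J = (ennreal (1 / u ^ k) * ennreal (u ^ k)) * J" by (simp only: one mult_1)
      also have "\<dots> = ennreal (1 / u ^ k) * (ennreal (u ^ k) * J)" by (rule mult.assoc)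
      finally have "J = ennreal (1 / u ^ k) * (ennreal (u ^ k) * J)" .
      then have "J \<le> ennreal (1 / u ^ k) * (ennreal (u ^ k) * J)" by (rule eq_refl)
      also have "\<dots> \<le> ennreal (1 / u ^ k) * ennreal (w ^ k * Kp)" using uJ by (rule mult_left_mono) simp
      also have "\<dots> = ennreal (1 / u ^ k * (w ^ k * Kp))"
        by (rule ennreal_mult'[symmetric]) (use uk0 in simp)
      also have "1 / u ^ k * (w ^ k * Kp) = w ^ k * Kp / u ^ k" by simp
      also have "w ^ k * Kp / u ^ k = (w / u) ^ k * Kp" by (simp add: power_divide)
      finally show ?thesis .
    qed
    have "J = 0"
    proof (rule ccontr)
      assume J0: "J \<noteq> 0"
      have "J \<le> ennreal Kp" using Jk[of 0] by simp
      then have "J \<noteq> \<infinity>" by (auto simp: top_unique)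
      then obtain j where j: "J = ennreal j" "j \<ge> 0" by (cases J) auto
      have jp: "j > 0" using j J0 by (cases "j = 0") auto
      have "(\<lambda>k. (w / u) ^ k) \<longlonglongrightarrow> 0" by (rule LIMSEQ_power_zero) (use w0 u0 wu in simp)
      then have "(\<lambda>k. (w / u) ^ k * Kp) \<longlonglongrightarrow> 0" by (rule tendsto_mult_left_zero)
      then have "eventually (\<lambda>k. (w / u) ^ k * Kp < j) sequentially" using jp by (rule order_tendstoD(2))
      then obtain k0 where "\<forall>k\<ge>k0. (w / u) ^ k * Kp < j" by (auto simp: eventually_sequentially)
      then have lt: "(w / u) ^ k0 * Kp < j" by simp
      have "ennreal j \<le> ennreal ((w / u) ^ k0 * Kp)" using Jk[of k0] j by simp
      then have "j \<le> (w / u) ^ k0 * Kp" using jp by (subst (asm) ennreal_le_iff) (use w0 u0 K0 in \<open>auto simp: Kp_def\<close>)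
      then show False using lt by simp
    qed
    have meas: "?h \<in> borel_measurable lborel" by measurable
    have "AE x in lborel. ?h x = 0" using \<open>J = 0\<close> nn_integral_0_iff_AE[OF meas] unfolding J_def by simp
    then show ?thesis
    proof (rule AE_mp, intro AE_I2 impI)
      fix x assume h0: "?h x = 0" and gx: "m + 1 < \<bar>g x\<bar>"
      then have "ennreal (\<psi> (x - real_of_int z) powr p) = 0" by simp
      then show "\<psi> (x - real_of_int z) = 0" using psi0 p by (intro ennreal_powr_zero) auto
    qed
  qed
  have "AE x in lborel. \<forall>z::int. m + 1 < \<bar>g x\<bar> \<longrightarrow> \<psi> (x - real_of_int z) = 0"
    unfolding AE_all_countable using null by blast
  then show ?thesis
  proof (rule AE_mp, intro AE_I2 impI)
    fix x assume H: "\<forall>z::int. m + 1 < \<bar>g x\<bar> \<longrightarrow> \<psi> (x - real_of_int z) = 0"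
    have ex: "\<exists>z::int. \<psi> (x - real_of_int z) \<noteq> 0"
    proof (rule ccontr)
      assume "\<not> (\<exists>z::int. \<psi> (x - real_of_int z) \<noteq> 0)"
      then have "((\<lambda>z::int. \<psi> (x - real_of_int z)) has_sum 0) UNIV" by (intro has_sum_0) auto
      moreover have "((\<lambda>z::int. \<psi> (x - real_of_int z)) has_sum 1) UNIV"
        using adm by (simp add: admissible_psi_def)
      ultimately have "(0::real) = 1" by (rule has_sum_unique)
      then show False by simp
    qed
    then obtain z where "\<psi> (x - real_of_int z) \<noteq> 0" by blast
    then have "\<not> (m + 1 < \<bar>g x\<bar>)" using H by blast
    then show "\<bar>g x\<bar> \<le> enn2real ?Mg + 1" unfolding mm by simp
  qed
qed

lemma mult_L1loc:
  assumes adm: "admissible_psi \<psi>" and p: "p > 0" and q: "q > 0" and s: "s > 0"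
    and g: "g \<in> borel_measurable lborel"
    and Mfin: "mult_qnorm (besov_space p q s) (besov_qnorm p q s) g < \<infinity>"
  shows "g \<in> L1_loc"
  unfolding L1_loc_def set_integrable_def
proof (intro CollectI allI)
  fix a b :: real
  define M where "M = enn2real (mult_qnorm (besov_space p q s) (besov_qnorm p q s) g) + 1"
  have M0: "M \<ge> 0" unfolding M_def by simp
  have AE: "AE x in lborel. \<bar>g x\<bar> \<le> M" unfolding M_def by (rule mult_bounded[OF adm p q s g Mfin])
  have [measurable]: "g \<in> borel_measurable lborel" by (rule g)
  have em: "emeasure lborel {a..b} < \<infinity>" by (cases "a \<le> b") auto
  have int: "integrable lborel (\<lambda>x. indicator {a..b} x * M)"
    by (intro integrable_mult_left integrable_real_indicator em) auto
  show "integrable lborel (\<lambda>x. indicator {a..b} x *\<^sub>R g x)"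
  proof (rule Bochner_Integration.integrable_bound[OF int])
    show "(\<lambda>x. indicator {a..b} x *\<^sub>R g x) \<in> borel_measurable lborel" by measurable
    show "AE x in lborel. norm (indicator {a..b} x *\<^sub>R g x) \<le> norm (indicator {a..b} x * M)"
      using AE by (rule AE_mp) (intro AE_I2 impI, use M0 in \<open>auto simp: indicator_def\<close>)
  qed
qed


theorem lemma2p13:
  fixes p s :: real and q :: ennreal and \<psi> :: "real \<Rightarrow> real"
  assumes "0 < p" and "0 < q" and "s > max 0 (1 / p - 1)" and "admissible_psi \<psi>"
  shows "cont_embed (mult_space (besov_space p q s) (besov_qnorm p q s))
                    (mult_qnorm (besov_space p q s) (besov_qnorm p q s))
                    (Ms_space \<psi> p q s) (Ms_qnorm \<psi> p q s)
       \<and> cont_embed (Ms_space \<psi> p q s) (Ms_qnorm \<psi> p q s)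
                    (unif_space \<psi> p q s) (unif_qnorm \<psi> p q s)"
proof -
  have p: "p > 0" and q: "q > 0" and adm: "admissible_psi \<psi>" using assms by auto
  have s: "s > 0" using assms(3) by simp
  obtain K where K0: "K \<ge> 0" and K: "\<forall>c. lp_qnorm p c \<le> 1 \<longrightarrow> besov_qnorm p q s (Fc \<psi> c) \<le> ennreal K"
    using Fc_besov_bound[OF adm p q s] by auto
  let ?X = "besov_space p q s"
  let ?N = "besov_qnorm p q s"
  have Fc_in: "Fc \<psi> c \<in> ?X" if c: "lp_qnorm p c \<le> 1" for c
  proof -
    have "Fc \<psi> c \<in> borel_measurable lborel" using Fc_measurable[OF adm, of c] by simp
    moreover have "?N (Fc \<psi> c) \<le> ennreal K" using K c by blast
    then have "?N (Fc \<psi> c) < \<infinity>" by (rule le_less_trans) simp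
    ultimately show ?thesis by (simp add: besov_space_def)
  qed
  have Ms_bound: "Ms_qnorm \<psi> p q s g \<le> ennreal K * mult_qnorm ?X ?N g" if g: "g \<in> mult_space ?X ?N" for g
  proof -
    have gm: "g \<in> borel_measurable lborel" and gf: "mult_qnorm ?X ?N g < \<infinity>"
      using g by (auto simp: mult_space_def)
    show ?thesis unfolding Ms_qnorm_def
    proof (rule SUP_least)
      fix c assume c: "c \<in> {c :: int \<Rightarrow> real. lp_qnorm p c \<le> 1}"
      then have c1: "lp_qnorm p c \<le> 1" by simp
      have e: "(\<lambda>x. g x * (\<Sum>\<^sub>\<infinity> z. c z * \<psi> (x - real_of_int z))) = (\<lambda>x. g x * Fc \<psi> c x)"
        by (simp add: Fc_def)
      have "?N (\<lambda>x. g x * Fc \<psi> c x) \<le> mult_qnorm ?X ?N g * ?N (Fc \<psi> c)"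
        using mult_ineq[OF p q gm gf Fc_in[OF c1]] by blast
      also have "\<dots> \<le> mult_qnorm ?X ?N g * ennreal K"
        using K c1 by (intro mult_left_mono) auto
      finally show "?N (\<lambda>x. g x * (\<Sum>\<^sub>\<infinity> z. c z * \<psi> (x - real_of_int z))) \<le> ennreal K * mult_qnorm ?X ?N g"
        unfolding e by (simp add: mult.commute)
    qed
  qed
  have sub1: "mult_space ?X ?N \<subseteq> Ms_space \<psi> p q s"
  proof
    fix g assume g: "g \<in> mult_space ?X ?N"
    have gm: "g \<in> borel_measurable lborel" and gf: "mult_qnorm ?X ?N g < \<infinity>"
      using g by (auto simp: mult_space_def)
    have "g \<in> L1_loc" by (rule mult_L1loc[OF adm p q s gm gf])
    moreover have "ennreal K * mult_qnorm ?X ?N g < \<infinity>"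
      using gf by (simp add: ennreal_mult_less_top)
    then have "Ms_qnorm \<psi> p q s g < \<infinity>" using Ms_bound[OF g] by (rule le_less_trans[rotated])
    ultimately show "g \<in> Ms_space \<psi> p q s" by (simp add: Ms_space_def)
  qed
  have part1: "cont_embed (mult_space ?X ?N) (mult_qnorm ?X ?N) (Ms_space \<psi> p q s) (Ms_qnorm \<psi> p q s)"
    unfolding cont_embed_def using sub1 Ms_bound K0 by blast
  have unif_le: "unif_qnorm \<psi> p q s f \<le> Ms_qnorm \<psi> p q s f" for f
    unfolding unif_qnorm_def
  proof (rule SUP_least)
    fix z :: int
    let ?d = "\<lambda>w::int. if w = z then (1::real) else 0"
    have e0: "(\<Sum>\<^sub>\<infinity> w. ?d w * \<psi> (x - real_of_int w)) = \<psi> (x - real_of_int z)" for x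
      using Fc_delta[of \<psi> z] unfolding Fc_def by (simp add: fun_eq_iff)
    have e: "(\<lambda>x. f x * \<psi> (x - real_of_int z)) = (\<lambda>x. f x * (\<Sum>\<^sub>\<infinity> w. ?d w * \<psi> (x - real_of_int w)))"
      by (simp add: e0)
    have "?N (\<lambda>x. f x * (\<Sum>\<^sub>\<infinity> w. ?d w * \<psi> (x - real_of_int w))) \<le> Ms_qnorm \<psi> p q s f"
      unfolding Ms_qnorm_def by (rule SUP_upper) (simp add: lp_delta[OF p])
    then show "?N (\<lambda>x. f x * \<psi> (x - real_of_int z)) \<le> Ms_qnorm \<psi> p q s f" unfolding e .
  qed
  have sub2: "Ms_space \<psi> p q s \<subseteq> unif_space \<psi> p q s"
    unfolding Ms_space_def unif_space_def using unif_le le_less_trans by blast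
  have part2: "cont_embed (Ms_space \<psi> p q s) (Ms_qnorm \<psi> p q s) (unif_space \<psi> p q s) (unif_qnorm \<psi> p q s)"
    unfolding cont_embed_def
  proof (intro conjI exI[of _ 1])
    show "Ms_space \<psi> p q s \<subseteq> unif_space \<psi> p q s" by (rule sub2)
    show "(0::real) \<le> 1" by simp
    show "\<forall>f\<in>Ms_space \<psi> p q s. unif_qnorm \<psi> p q s f \<le> ennreal 1 * Ms_qnorm \<psi> p q s f"
      using unif_le by simp
  qed
  show ?thesis using part1 part2 by blast
qed

end
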